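(* For every $r\in\mathbb{F}_2((x^{-1}))$ we have $T([r])=[S(r)]$, and $T^n([r])=[S^n(r)]$ for all $n\in\mathbb{N}$.
   Context: $\mathbb{F}_2((x^{-1}))$ is the field of formal series $\sum_{z\in\mathbb{Z}}a_zx^z$, $a_z\in\mathbb{F}_2$, with $a_z\ne0$ for only finitely many positive $z$. The polynomial part is $[\sum a_zx^z]=\sum_{z\ge0}a_zx^z$. $S(r)=\frac{r}{x+1}$ if $[r](1)=0$ and $S(r)=\frac{xr}{x+1}$ if $[r](1)=1$. $T:\mathbb{F}_2[x]\to\mathbb{F}_2[x]$ is given by $T(f)=\frac{f}{x+1}$ if $f(1)=0$ and $T(f)=\frac{xf+1}{x+1}$ if $f(1)=1$. *)

theory Defs
  imports "HOL-Computational_Algebra.Polynomial" "HOL-Library.Z2"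
begin

text \<open>Elements of F_2((x^-1)) are represented by their coefficient functions
  r :: int \<Rightarrow> bit (r z is the coefficient of x^z), with only finitely many
  nonzero coefficients at positive exponents.\<close>

definition laurent :: "(int \<Rightarrow> bit) \<Rightarrow> bool" where
  "laurent r \<longleftrightarrow> finite {z. z > 0 \<and> r z \<noteq> 0}"

definition mult_x :: "(int \<Rightarrow> bit) \<Rightarrow> (int \<Rightarrow> bit)" where
  "mult_x r = (\<lambda>z. r (z - 1))"

definition mult_x1 :: "(int \<Rightarrow> bit) \<Rightarrow> (int \<Rightarrow> bit)" where
  "mult_x1 r = (\<lambda>z. r (z - 1) + r z)"

definition div_x1 :: "(int \<Rightarrow> bit) \<Rightarrow> (int \<Rightarrow> bit)" where
  "div_x1 r = (THE s. laurent s \<and> mult_x1 s = r)"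

definition poly_part :: "(int \<Rightarrow> bit) \<Rightarrow> bit poly" where
  "poly_part r = (\<Sum>n\<in>{n::nat. r (int n) \<noteq> 0}. monom (r (int n)) n)"

definition S :: "(int \<Rightarrow> bit) \<Rightarrow> (int \<Rightarrow> bit)" where
  "S r = (if poly (poly_part r) 1 = 0 then div_x1 r else div_x1 (mult_x r))"

definition T :: "bit poly \<Rightarrow> bit poly" where
  "T f = (if poly f 1 = 0 then f div [:1, 1:] else (monom 1 1 * f + 1) div [:1, 1:])"

end

theory Submission
  imports Defs
begin

lemma bit_add_self: "(a::bit) + a = 0"
  by (cases a) simp_all

lemma laurent_bound:
  assumes "laurent r"
  obtains N where "N \<ge> 0" "\<And>z. z > N \<Longrightarrow> r z = 0"
proof -
  have f: "finite {z. z > 0 \<and> r z \<noteq> 0}" using assms by (simp add: laurent_def)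
  then obtain B where B: "\<And>z. z \<in> {z. z > 0 \<and> r z \<noteq> 0} \<Longrightarrow> z \<le> B"
    using bdd_above_finite[OF f] by (auto simp: bdd_above_def)
  show ?thesis
  proof (rule that[of "max B 0"])
    fix z assume "z > max B 0" then show "r z = 0" using B[of z] by force
  qed simp
qed

lemma laurent_fromB:
  assumes "\<And>z. z > N \<Longrightarrow> r z = 0"
  shows "laurent r"
proof -
  have "{z. z > 0 \<and> r z \<noteq> 0} \<subseteq> {0..N}"
  proof clarify
    fix z assume "0 < z" "r z \<noteq> 0"
    then have "\<not> N < z" using assms[of z] by auto
    then show "z \<in> {0..N}" using \<open>0 < z\<close> by auto
  qed
  then show ?thesis unfolding laurent_def by (rule finite_subset) simp
qed

lemma laurent_mult_x: assumes "laurent r" shows "laurent (mult_x r)"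
proof -
  obtain N where N: "\<And>z. z > N \<Longrightarrow> r z = 0" using laurent_bound[OF assms] by blast
  show ?thesis by (rule laurent_fromB[of "N + 1"]) (simp add: mult_x_def N)
qed

lemma coeff_poly_part:
  assumes "laurent r"
  shows "coeff (poly_part r) n = r (int n)"
proof -
  obtain N where N: "N \<ge> 0" "\<And>z. z > N \<Longrightarrow> r z = 0" using laurent_bound[OF assms] by blast
  have fin: "finite {n::nat. r (int n) \<noteq> 0}"
  proof (rule finite_subset[of _ "{..nat N}"])
    show "{n::nat. r (int n) \<noteq> 0} \<subseteq> {..nat N}"
    proof (rule subsetI)
      fix x assume "x \<in> {n::nat. r (int n) \<noteq> 0}"
      then have "r (int x) \<noteq> 0" by simp
      then have "\<not> int x > N" using N(2) by blast
      then show "x \<in> {..nat N}" by simp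
    qed
  qed simp
  have "coeff (poly_part r) n = (\<Sum>m\<in>{n::nat. r (int n) \<noteq> 0}. coeff (monom (r (int m)) m) n)"
    unfolding poly_part_def by (simp add: coeff_sum)
  also have "\<dots> = (\<Sum>m\<in>{n::nat. r (int n) \<noteq> 0}. if m = n then r (int m) else 0)"
    by (intro sum.cong) (auto simp: coeff_monom)
  also have "\<dots> = r (int n)"
    using fin by (simp add: sum.delta)
  finally show ?thesis .
qed

lemma div_x1_exists:
  assumes "laurent r"
  shows "\<exists>s. laurent s \<and> mult_x1 s = r"
proof -
  obtain N where N: "N \<ge> 0" "\<And>z. z > N \<Longrightarrow> r z = 0" using laurent_bound[OF assms] by blast
  define s where "s z = (\<Sum>k\<in>{z<..N}. r k)" for z
  have "laurent s"
    by (rule laurent_fromB[of N]) (simp add: s_def)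
  moreover have "mult_x1 s = r"
  proof
    fix z
    show "mult_x1 s z = r z"
    proof (cases "z \<le> N")
      case True
      have "{z-1<..N} = insert z {z<..N}" using True by auto
      then have "s (z-1) = r z + s z" by (simp add: s_def)
      then show ?thesis by (simp del: add_bit_eq_xor add: mult_x1_def add.assoc bit_add_self)
    next
      case False
      then show ?thesis using N(2)[of z] by (simp add: mult_x1_def s_def)
    qed
  qed
  ultimately show ?thesis by blast
qed

lemma div_x1_unique:
  assumes "laurent s" "laurent s'" "mult_x1 s = mult_x1 s'"
  shows "s = s'"
proof
  fix z
  obtain N1 where N1: "\<And>z. z > N1 \<Longrightarrow> s z = 0" using laurent_bound[OF assms(1)] by blast
  obtain N2 where N2: "\<And>z. z > N2 \<Longrightarrow> s' z = 0" using laurent_bound[OF assms(2)] by blast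
  define M where "M = max (max N1 N2) z + 1"
  have step: "s (w - 1) = s' (w - 1)" if "s w = s' w" for w
  proof -
    have "s (w - 1) + s w = s' (w - 1) + s' w"
      using fun_cong[OF assms(3), of w] by (simp add: mult_x1_def)
    then show ?thesis using that by (simp del: add_bit_eq_xor)
  qed
  have "s (M - int k) = s' (M - int k)" for k
  proof (induction k)
    case 0 then show ?case using N1[of M] N2[of M] by (simp add: M_def)
  next
    case (Suc k)
    then have "s (M - int k - 1) = s' (M - int k - 1)" by (intro step) simp
    then show ?case by (simp add: algebra_simps)
  qed
  moreover have "M - int (nat (M - z)) = z" unfolding M_def by linarith
  ultimately show "s z = s' z" by metis
qed

lemma div_x1_prop:
  assumes "laurent r"
  shows "laurent (div_x1 r) \<and> mult_x1 (div_x1 r) = r"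
proof -
  obtain s where s: "laurent s \<and> mult_x1 s = r" using div_x1_exists[OF assms] by blast
  have "(THE s. laurent s \<and> mult_x1 s = r) = s"
    using s div_x1_unique by (intro the_equality) blast+
  then show ?thesis using s by (simp add: div_x1_def)
qed

lemma pp_mult_x1:
  assumes "laurent s"
  shows "poly_part (mult_x1 s) = [:1,1:] * poly_part s + [:s (-1):]"
proof -
  obtain N where N: "\<And>z. z > N \<Longrightarrow> s z = 0" using laurent_bound[OF assms] by blast
  have l: "laurent (mult_x1 s)" by (rule laurent_fromB[of "N + 1"]) (simp add: mult_x1_def N)
  show ?thesis
  proof (rule poly_eqI)
    fix n
    have "coeff (poly_part (mult_x1 s)) n = mult_x1 s (int n)" by (rule coeff_poly_part[OF l])
    also have "\<dots> = s (int n - 1) + s (int n)" by (simp add: mult_x1_def)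
    also have "\<dots> = coeff ([:1,1:] * poly_part s + [:s (-1):]) n"
      by (cases n) (simp_all del: add_bit_eq_xor add: coeff_poly_part[OF assms] coeff_pCons algebra_simps)
    finally show "coeff (poly_part (mult_x1 s)) n = coeff ([:1,1:] * poly_part s + [:s (-1):]) n" .
  qed
qed

lemma pp_mult_x:
  assumes "laurent r"
  shows "poly_part (mult_x r) = monom 1 1 * poly_part r + [:r (-1):]"
proof (rule poly_eqI)
  fix n
  have "coeff (poly_part (mult_x r)) n = mult_x r (int n)"
    by (rule coeff_poly_part[OF laurent_mult_x[OF assms]])
  also have "\<dots> = r (int n - 1)" by (simp add: mult_x_def)
  also have "\<dots> = coeff (monom 1 1 * poly_part r + [:r (-1):]) n"
    by (cases n) (simp_all del: add_bit_eq_xor add: coeff_poly_part[OF assms] coeff_monom_mult coeff_pCons)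
  finally show "coeff (poly_part (mult_x r)) n = coeff (monom 1 1 * poly_part r + [:r (-1):]) n" .
qed

lemma step_lemma:
  assumes "laurent r"
  shows "T (poly_part r) = poly_part (S r) \<and> laurent (S r)"
proof (cases "poly (poly_part r) 1 = 0")
  case True
  define s where "s = div_x1 r"
  have s: "laurent s" "mult_x1 s = r" using div_x1_prop[OF assms] by (auto simp: s_def)
  have e: "poly_part r = [:1,1:] * poly_part s + [:s (-1):]" using pp_mult_x1[OF s(1)] s(2) by simp
  have "poly (poly_part r) 1 = s (-1)" unfolding e by simp
  then have "s (-1) = 0" using True by simp
  then have "poly_part r = [:1,1:] * poly_part s" using e by simp
  then have "T (poly_part r) = poly_part s" using True
    by (simp only: T_def if_True) (simp del: mult_pCons_left add: nonzero_mult_div_cancel_left)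
  then show ?thesis using True s by (simp add: S_def s_def)
next
  case False
  define s where "s = div_x1 (mult_x r)"
  have s: "laurent s" "mult_x1 s = mult_x r"
    using div_x1_prop[OF laurent_mult_x[OF assms]] by (auto simp: s_def)
  have e: "monom 1 1 * poly_part r + [:r (-1):] = [:1,1:] * poly_part s + [:s (-1):]"
    using pp_mult_x1[OF s(1)] pp_mult_x[OF assms] s(2) by simp
  have p1: "poly (poly_part r) 1 = 1" using False by simp
  have "poly (monom 1 1 * poly_part r + [:r (-1):]) 1 = poly ([:1,1:] * poly_part s + [:s (-1):]) 1"
    using e by simp
  then have "1 + r (-1) = s (-1)" using p1 by (simp add: poly_monom)
  then have "s (-1) = r (-1) + 1" by (simp add: add.commute)
  then have "monom 1 1 * poly_part r + 1 = [:1,1:] * poly_part s"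
  proof -
    assume h: "s (-1) = r (-1) + 1"
    have "monom 1 1 * poly_part r + 1 = (monom 1 1 * poly_part r + [:r (-1):]) + [:r (-1):] + 1"
    proof -
      have "[:r (-1):] + [:r (-1):] = (0::bit poly)" by (simp del: add_bit_eq_xor add: bit_add_self)
      then show ?thesis by (simp add: add.assoc)
    qed
    also have "\<dots> = [:1,1:] * poly_part s + ([:s (-1):] + [:r (-1):] + 1)"
      using e by (simp add: add.assoc)
    also have "[:s (-1):] + [:r (-1):] + 1 = 0"
      using h by (simp del: add_bit_eq_xor add: one_pCons add.assoc bit_add_self add.commute[of 1] add.left_commute[of _ 1])
    finally show ?thesis by simp
  qed
  then have "T (poly_part r) = poly_part s" using False
    by (simp only: T_def if_False) (simp del: mult_pCons_left add: nonzero_mult_div_cancel_left)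
  then show ?thesis using False s by (simp add: S_def s_def)
qed

theorem lemma2p2:
  fixes r :: "int \<Rightarrow> bit"
  assumes "laurent r"
  shows "T (poly_part r) = poly_part (S r) \<and>
         (\<forall>n::nat. (T ^^ n) (poly_part r) = poly_part ((S ^^ n) r))"
proof -
  have "(T ^^ n) (poly_part r) = poly_part ((S ^^ n) r) \<and> laurent ((S ^^ n) r)" for n
  proof (induction n)
    case 0 then show ?case using assms by simp
  next
    case (Suc n) then show ?case using step_lemma[of "(S ^^ n) r"] by simp
  qed
  then show ?thesis using step_lemma[OF assms] by blast
qed

end
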